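(* Let $a,b,c$ be positive numbers with $a<b<c$, and suppose $Q_{a,b,c}<+\infty$. Then for every $t\in[0,b)$ and every complex vector $\mathbf z=(\mathbf z(\lambda))_{\lambda\in b\mathbb Z}$, $$\sum_{\mu\in a\mathbb Z,\ 0\le\mu\le aQ_{a,b,c}+2a+b+c}|(\mathbf M_{a,b,c}(t)\mathbf z)(\mu)|\ \ge\ \frac{b}{2c}|\mathbf z(0)|.$$
   Context: For $a,b,c>0$ and $t\in\mathbb R$, $\mathbf M_{a,b,c}(t)=(\chi_{[0,c)}(t-\mu+\lambda))_{\mu\in a\mathbb Z,\lambda\in b\mathbb Z}$ is the infinite matrix with rows indexed by $a\mathbb Z$ and columns by $b\mathbb Z$, acting by $(\mathbf M_{a,b,c}(t)\mathbf x)(\mu)=\sum_{\lambda\in b\mathbb Z}\chi_{[0,c)}(t-\mu+\lambda)\mathbf x(\lambda)$ (each such sum is finite). $\mathcal B_b$ is the set of vectors $(\mathbf x(\lambda))_{\lambda\in b\mathbb Z}$ with entries in $\{0,1\}$. For $t\in\mathbb R$ and $\mathbf x\in\mathcal B_b$, let $K(t,\mathbf x)=\{\mu\in a\mathbb Z:(\mathbf M_{a,b,c}(t)\mathbf x)(\mu)=2\}$, let $Q_{a,b,c}(t,\mathbf x)=0$ if $K(t,\mathbf x)=\emptyset$ and otherwise $Q_{a,b,c}(t,\mathbf x)=\sup\{n\in\mathbb N:[\mu,\mu+na)\cap a\mathbb Z\subset K(t,\mathbf x)\text{ for some }\mu\in a\mathbb Z\}$, and $Q_{a,b,c}=\sup_{t\in\mathbb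 R}\sup_{\mathbf x\in\mathcal B_b}Q_{a,b,c}(t,\mathbf x)$. *)

theory Defs
  imports "HOL-Analysis.Analysis" "HOL-Library.Extended_Nat"
begin

text \<open>Vectors indexed by a\<int> (resp. b\<int>) are represented as functions on int:
  index m stands for \<mu> = a*m, index k stands for \<lambda> = b*k.\<close>

definition Mapply :: "real \<Rightarrow> real \<Rightarrow> real \<Rightarrow> real \<Rightarrow> (int \<Rightarrow> 'v::comm_monoid_add) \<Rightarrow> int \<Rightarrow> 'v" where
  "Mapply a b c t x m =
     (\<Sum>k\<in>{k::int. 0 \<le> t - a * of_int m + b * of_int k \<and> t - a * of_int m + b * of_int k < c}. x k)"

definition Bvec :: "(int \<Rightarrow> nat) set" where
  "Bvec = {x. \<forall>k. x k \<in> {0, 1}}"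

definition Kset :: "real \<Rightarrow> real \<Rightarrow> real \<Rightarrow> real \<Rightarrow> (int \<Rightarrow> nat) \<Rightarrow> int set" where
  "Kset a b c t x = {m. Mapply a b c t x m = 2}"

definition Qtx :: "real \<Rightarrow> real \<Rightarrow> real \<Rightarrow> real \<Rightarrow> (int \<Rightarrow> nat) \<Rightarrow> enat" where
  "Qtx a b c t x =
     (if Kset a b c t x = {} then 0
      else Sup {enat n | n. \<exists>m::int. \<forall>j::nat. j < n \<longrightarrow> m + int j \<in> Kset a b c t x})"

definition Qabc :: "real \<Rightarrow> real \<Rightarrow> real \<Rightarrow> enat" where
  "Qabc a b c = (SUP t\<in>(UNIV::real set). SUP x\<in>Bvec. Qtx a b c t x)"

end

theory Submission imports Defs begin



locale setup35 =
  fixes a b c t :: real and z :: "int \<Rightarrow> complex"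
  assumes a0: "0 < a" and ab: "a < b" and bc: "b < c" and t0: "0 \<le> t" and tb: "t < b"
begin

definition L :: "nat \<Rightarrow> int" where "L k = \<lceil>(a * real k - t) / b\<rceil>"
definition R :: "nat \<Rightarrow> int" where "R k = \<lceil>(a * real k - t + c) / b\<rceil>"

lemma b0: "0 < b" using a0 ab by linarith

lemma Mapply_eq: "Mapply a b c t x (int k) = (\<Sum>v\<in>{L k..<R k}. x v)"
proof -
  have "{k'::int. 0 \<le> t - a * of_int (int k) + b * of_int k' \<and> t - a * of_int (int k) + b * of_int k' < c}
        = {L k..<R k}"
  proof (intro set_eqI iffI)
    fix v assume "v \<in> {k'::int. 0 \<le> t - a * of_int (int k) + b * of_int k' \<and> t - a * of_int (int k) + b * of_int k' < c}"
    hence h1: "(a * real k - t) / b \<le> of_int v" and h2: "of_int v < (a * real k - t + c) / b"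
      using b0 by (auto simp: pos_divide_le_eq pos_less_divide_eq mult.commute)
    show "v \<in> {L k..<R k}" using h1 h2 unfolding L_def R_def
      by (simp add: ceiling_le_iff less_ceiling_iff)
  next
    fix v assume "v \<in> {L k..<R k}"
    hence h1: "(a * real k - t) / b \<le> of_int v" and h2: "of_int v < (a * real k - t + c) / b"
      unfolding L_def R_def by (auto simp add: ceiling_le_iff less_ceiling_iff)
    show "v \<in> {k'::int. 0 \<le> t - a * of_int (int k) + b * of_int k' \<and> t - a * of_int (int k) + b * of_int k' < c}"
      using h1 h2 b0 by (auto simp: pos_divide_le_eq pos_less_divide_eq mult.commute)
  qed
  thus ?thesis unfolding Mapply_def by simp
qed

lemma ceil_step:
  fixes x d :: real assumes "0 \<le> d" "d < 1"
  shows "\<lceil>x + d\<rceil> = \<lceil>x\<rceil> \<or> \<lceil>x + d\<rceil> = \<lceil>x\<rceil> + 1"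
proof -
  have "\<lceil>x\<rceil> \<le> \<lceil>x + d\<rceil>" using assms by (intro ceiling_mono) simp
  moreover have "\<lceil>x + d\<rceil> \<le> \<lceil>x\<rceil> + 1"
  proof -
    have "x + d \<le> of_int (\<lceil>x\<rceil> + 1)" using assms le_of_int_ceiling[of x] by simp linarith
    thus ?thesis by (simp only: ceiling_le_iff)
  qed
  ultimately show ?thesis by linarith
qed

lemma L_step: "L (Suc k) = L k \<or> L (Suc k) = L k + 1"
proof -
  have "(a * real (Suc k) - t) / b = (a * real k - t) / b + a / b"
    using b0 by (simp add: field_simps)
  moreover have "0 \<le> a / b" "a / b < 1" using a0 ab b0 by auto
  ultimately show ?thesis unfolding L_def using ceil_step by metis
qed

lemma R_step: "R (Suc k) = R k \<or> R (Suc k) = R k + 1"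
proof -
  have "(a * real (Suc k) - t + c) / b = (a * real k - t + c) / b + a / b"
    using b0 by (simp add: field_simps)
  moreover have "0 \<le> a / b" "a / b < 1" using a0 ab b0 by auto
  ultimately show ?thesis unfolding R_def using ceil_step by metis
qed

lemma LR: "L k < R k"
proof -
  have "(a * real k - t + c) / b = (a * real k - t) / b + c / b"
    using b0 by (simp add: field_simps)
  moreover have "c / b > 1" using bc b0 by simp
  ultimately have "(a * real k - t) / b + 1 \<le> (a * real k - t + c) / b" by linarith
  hence "\<lceil>(a * real k - t) / b + 1\<rceil> \<le> R k" unfolding R_def by (rule ceiling_mono)
  thus ?thesis unfolding L_def by simp
qed

lemma L0: "L 0 = 0"
proof -
  have "-1 < - t / b" "- t / b \<le> 0" using t0 tb b0 by (auto simp: field_simps)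
  thus ?thesis unfolding L_def by (simp add: ceiling_eq_iff)
qed

lemma R_mono: "k \<le> k' \<Longrightarrow> R k \<le> R k'"
proof (induction k' rule: dec_induct)
  case base then show ?case by simp
next
  case (step n) then show ?case using R_step[of n] by linarith
qed

end


context setup35 begin

primrec lab :: "nat \<Rightarrow> int \<Rightarrow> int option" where
  "lab 0 = (\<lambda>v. if v \<in> {L 0..<R 0} then Some v else None)"
| "lab (Suc k) = (if L (Suc k) = L k + 1 \<and> R (Suc k) = R k + 1
                   then (lab k)(R k := lab k (L k)) else lab k)"

lemma lab_none: "R k \<le> v \<Longrightarrow> lab k v = None"
proof (induction k arbitrary: v)
  case 0 then show ?case by simp
next
  case (Suc k)
  have "R k \<le> R (Suc k)" using R_step[of k] by linarith
  then show ?case using Suc by auto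
qed

lemma lab_stable: "v < R k \<Longrightarrow> lab (k + j) v = lab k v"
proof (induction j)
  case 0 then show ?case by simp
next
  case (Suc j)
  have "R k \<le> R (k + j)" by (rule R_mono) simp
  then show ?case using Suc by auto
qed

definition cnt :: "nat \<Rightarrow> int \<Rightarrow> nat" where
  "cnt k q = card {v\<in>{L k..<R k}. lab k v = Some q}"

lemma cnt_step: "cnt (Suc k) q \<le> cnt k q"
proof -
  let ?S' = "{v\<in>{L (Suc k)..<R (Suc k)}. lab (Suc k) v = Some q}"
  let ?S = "{v\<in>{L k..<R k}. lab k v = Some q}"
  define f where "f v = (if v = R k then L k else v)" for v
  have LR': "L k < R k" by (rule LR)
  have sub: "f ` ?S' \<subseteq> ?S"
  proof
    fix w assume "w \<in> f ` ?S'"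
    then obtain v where v: "v \<in> ?S'" and w: "w = f v" by auto
    show "w \<in> ?S"
    proof (cases "v = R k")
      case True
      have "lab k (R k) = None" by (rule lab_none) simp
      then have "L (Suc k) = L k + 1 \<and> R (Suc k) = R k + 1" "lab k (L k) = Some q"
        using v True by (auto split: if_splits)
      then show ?thesis using w True LR' by (simp add: f_def)
    next
      case False
      have "v < R k"
        using v False R_step[of k] by auto
      moreover have "L k \<le> v" using v L_step[of k] by auto
      moreover have "lab (Suc k) v = lab k v" using False by simp
      ultimately show ?thesis using v w False by (simp add: f_def)
    qed
  qed
  have inj: "inj_on f ?S'"
  proof (rule inj_onI)
    fix v w assume v: "v \<in> ?S'" and w: "w \<in> ?S'" and e: "f v = f w"
    have "lab k (R k) = None" by (rule lab_none) simp
    hence key: "x \<in> ?S' \<Longrightarrow> x = R k \<Longrightarrow> L (Suc k) = L k + 1" for x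
      by (auto split: if_splits)
    show "v = w"
    proof (cases "v = R k"; cases "w = R k")
      assume "v = R k" "w \<noteq> R k"
      then show ?thesis using e key[OF v] w by (auto simp: f_def)
    next
      assume "v \<noteq> R k" "w = R k"
      then show ?thesis using e key[OF w] v by (auto simp: f_def)
    qed (use e in \<open>auto simp: f_def\<close>)
  qed
  have "card ?S' \<le> card ?S"
    by (rule card_inj_on_le[OF inj sub]) (rule finite_subset[of _ "{L k..<R k}"], auto)
  thus ?thesis unfolding cnt_def .
qed

lemma cnt_mono: "cnt (k + j) q \<le> cnt k q"
  by (induction j) (auto intro: order_trans[OF cnt_step])

lemma cnt0: "cnt 0 q = (if q \<in> {L 0..<R 0} then 1 else 0)"
proof -
  have "{v\<in>{L 0..<R 0}. lab 0 v = Some q} = (if q \<in> {L 0..<R 0} then {q} else {})"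
    by auto
  thus ?thesis unfolding cnt_def by simp
qed

end


context setup35 begin

definition S :: "nat \<Rightarrow> complex" where "S k = Mapply a b c t z (int k)"

definition g :: "nat \<Rightarrow> int \<Rightarrow> real" where
  "g k v = (case lab k v of None \<Rightarrow> cmod (z v) | Some q \<Rightarrow> if q = 0 then cmod (z v - z 0) else 0)"

definition ex0 :: "nat \<Rightarrow> bool" where "ex0 k = (\<exists>v\<in>{L k..<R k}. lab k v = Some 0)"

definition Phi :: "nat \<Rightarrow> real" where
  "Phi k = (\<Sum>v\<in>{L k..<R k}. g k v) + (if ex0 k then 0 else cmod (z 0))"

lemma g_nonneg: "0 \<le> g k v" by (auto simp: g_def split: option.splits)

lemma S_eq: "S k = (\<Sum>v\<in>{L k..<R k}. z v)" unfolding S_def by (rule Mapply_eq)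

lemma Phi_step: "Phi (Suc k) \<le> Phi k + cmod (S k) + cmod (S (Suc k))"
proof -
  have LR': "L k < R k" by (rule LR)
  have nR: "lab k (R k) = None" by (rule lab_none) simp
  have W1: "{L k..<R k} = insert (L k) {L k + 1..<R k}" using LR' by auto
  have W2: "{L k..<R k + 1} = insert (R k) {L k..<R k}" using LR' by auto
  have W3: "{L k + 1..<R k + 1} = insert (R k) {L k + 1..<R k}" using LR' by auto
  have nS: "0 \<le> cmod (S k)" "0 \<le> cmod (S (Suc k))" by auto
  consider "L (Suc k) = L k" "R (Suc k) = R k" | "L (Suc k) = L k" "R (Suc k) = R k + 1"
    | "L (Suc k) = L k + 1" "R (Suc k) = R k" | "L (Suc k) = L k + 1" "R (Suc k) = R k + 1"
    using L_step[of k] R_step[of k] by blast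
  then show ?thesis
  proof cases
    case 1
    then have "Phi (Suc k) = Phi k" by (simp add: Phi_def g_def ex0_def)
    then show ?thesis using nS by linarith
  next
    case 2
    have labS: "lab (Suc k) = lab k" using 2 by simp
    have gS: "g (Suc k) = g k" unfolding g_def labS ..
    have ex: "ex0 (Suc k) = ex0 k" unfolding ex0_def labS using 2 W2 nR by auto
    have sumg: "(\<Sum>v\<in>{L (Suc k)..<R (Suc k)}. g (Suc k) v) = cmod (z (R k)) + (\<Sum>v\<in>{L k..<R k}. g k v)"
      unfolding gS using 2 W2 nR by (simp add: g_def)
    have "S (Suc k) = z (R k) + S k" unfolding S_eq using 2 W2 by simp
    hence "z (R k) = S (Suc k) - S k" by simp
    hence "cmod (z (R k)) \<le> cmod (S (Suc k)) + cmod (S k)" using norm_triangle_ineq4 by metis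
    then show ?thesis unfolding Phi_def sumg ex by linarith
  next
    case 3
    have labS: "lab (Suc k) = lab k" using 3 by simp
    have gS: "g (Suc k) = g k" unfolding g_def labS ..
    have sum1: "(\<Sum>v\<in>{L k..<R k}. g k v) = g k (L k) + (\<Sum>v\<in>{L k + 1..<R k}. g k v)"
      unfolding W1 by simp
    have sum2: "(\<Sum>v\<in>{L (Suc k)..<R (Suc k)}. g (Suc k) v) = (\<Sum>v\<in>{L k + 1..<R k}. g k v)"
      unfolding gS using 3 by simp
    have "S k = z (L k) + S (Suc k)" unfolding S_eq using 3 W1 by simp
    hence zl: "cmod (z (L k)) \<le> cmod (S k) + cmod (S (Suc k))"
      using norm_triangle_ineq4[of "S k" "S (Suc k)"] by (simp add: algebra_simps)
    have exi: "ex0 (Suc k) \<Longrightarrow> ex0 k" unfolding ex0_def labS using 3 W1 by auto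
    have key: "(if ex0 (Suc k) then 0 else cmod (z 0)) \<le> g k (L k) + (if ex0 k then 0 else cmod (z 0)) + cmod (S k) + cmod (S (Suc k))"
    proof (cases "ex0 (Suc k)")
      case True then show ?thesis using exi g_nonneg[of k "L k"] nS by simp
    next
      case F: False
      show ?thesis
      proof (cases "ex0 k")
        case False then show ?thesis using F g_nonneg[of k "L k"] nS by simp
      next
        case True
        then obtain v where v: "v \<in> {L k..<R k}" "lab k v = Some 0" unfolding ex0_def by auto
        have "v = L k"
        proof (rule ccontr)
          assume "v \<noteq> L k"
          then have "v \<in> {L (Suc k)..<R (Suc k)}" using v 3 by auto
          then show False using F v unfolding ex0_def labS by auto
        qed
        then have gl: "g k (L k) = cmod (z (L k) - z 0)" using v by (simp add: g_def)
        have "cmod (z 0) \<le> cmod (z (L k) - z 0) + cmod (z (L k))"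
          using norm_triangle_ineq4[of "z (L k) - z 0" "z (L k)"] by (simp add: norm_minus_commute)
        then show ?thesis using F True gl zl by simp
      qed
    qed
    show ?thesis unfolding Phi_def sum1 sum2 using key by linarith
  next
    case 4
    have labS: "lab (Suc k) = (lab k)(R k := lab k (L k))" using 4 by simp
    have gS: "v \<noteq> R k \<Longrightarrow> g (Suc k) v = g k v" for v unfolding g_def labS by simp
    have sum1: "(\<Sum>v\<in>{L k..<R k}. g k v) = g k (L k) + (\<Sum>v\<in>{L k + 1..<R k}. g k v)"
      unfolding W1 by simp
    have sum2: "(\<Sum>v\<in>{L (Suc k)..<R (Suc k)}. g (Suc k) v) = g (Suc k) (R k) + (\<Sum>v\<in>{L k + 1..<R k}. g k v)"
      unfolding 4 W3 by (simp add: gS)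
    have s1: "S k = z (L k) + (\<Sum>v\<in>{L k + 1..<R k}. z v)" unfolding S_eq W1 by simp
    have s2: "S (Suc k) = z (R k) + (\<Sum>v\<in>{L k + 1..<R k}. z v)" unfolding S_eq 4 W3 by simp
    have d: "z (L k) - z (R k) = S k - S (Suc k)" using s1 s2 by simp
    have dn: "cmod (z (L k) - z (R k)) \<le> cmod (S k) + cmod (S (Suc k))"
      unfolding d by (rule norm_triangle_ineq4)
    have gR: "g (Suc k) (R k) \<le> g k (L k) + cmod (z (L k) - z (R k))"
    proof (cases "lab k (L k)")
      case None
      then show ?thesis using norm_triangle_ineq4[of "z (L k)" "z (L k) - z (R k)"]
        by (simp add: g_def labS del: lab.simps)
    next
      case (Some q)
      then show ?thesis using norm_triangle_ineq[of "z (L k) - z 0" "z (R k) - z (L k)"]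
        by (auto simp add: g_def labS norm_minus_commute simp del: lab.simps)
    qed
    have ex: "ex0 (Suc k) = ex0 k"
    proof -
      have "ex0 (Suc k) = (lab k (L k) = Some 0 \<or> (\<exists>v\<in>{L k + 1..<R k}. lab k v = Some 0))"
        unfolding ex0_def 4 W3 labS by auto
      also have "\<dots> = ex0 k" unfolding ex0_def W1 by auto
      finally show ?thesis .
    qed
    show ?thesis unfolding Phi_def sum1 sum2 ex using gR dn by linarith
  qed
qed

lemma Phi0: "Phi 0 = 0"
proof -
  have "ex0 0" unfolding ex0_def using L0 LR[of 0] by auto
  moreover have "g 0 v = 0" if "v \<in> {L 0..<R 0}" for v using that by (simp add: g_def L0)
  ultimately show ?thesis unfolding Phi_def by simp
qed

lemma Phi_bound: "Phi k \<le> (\<Sum>j<k. cmod (S j) + cmod (S (Suc j)))"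
proof (induction k)
  case 0 then show ?case by (simp add: Phi0)
next
  case (Suc k) then show ?case using Phi_step[of k] by simp
qed

end


context setup35 begin

lemma finW: "finite {v\<in>{l..<r::int}. P v}"
  by (rule finite_subset[of _ "{l..<r}"]) auto

lemma cnt_le: "k \<le> K \<Longrightarrow> cnt K p \<le> cnt k p"
  using cnt_mono[of k "K - k" p] by simp

lemma cnt_one:
  assumes "v \<in> {L K..<R K}" "lab K v = Some p" "k \<le> K"
  shows "cnt k p = 1"
proof -
  have "card {v\<in>{L K..<R K}. lab K v = Some p} > 0"
    using assms finW[of "L K" "R K" "\<lambda>v. lab K v = Some p"] by (auto simp: card_gt_0_iff simp del: atLeastLessThan_iff)
  hence "cnt K p \<ge> 1" unfolding cnt_def by simp
  moreover have "cnt K p \<le> cnt k p" using cnt_le[OF assms(3)] .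
  moreover have "cnt 0 p \<le> 1" by (simp add: cnt0)
  moreover have "cnt k p \<le> cnt 0 p" using cnt_le[of 0 k p] by simp
  ultimately show ?thesis by linarith
qed

lemma no_two:
  assumes Q: "Qabc a b c = enat K"
    and v0: "v0 \<in> {L K..<R K}" "lab K v0 = Some 0"
    and v1: "v1 \<in> {L K..<R K}" "lab K v1 = Some q" and q: "q \<noteq> 0"
  shows False
proof -
  define x :: "int \<Rightarrow> nat" where "x v = (if lab K v = Some 0 \<or> lab K v = Some q then 1 else 0)" for v
  have xB: "x \<in> Bvec" unfolding Bvec_def x_def by auto
  have M2: "Mapply a b c t x (int k) = 2" if k: "k \<le> K" for k
  proof -
    have "Mapply a b c t x (int k) = (\<Sum>v\<in>{L k..<R k}. x v)" by (rule Mapply_eq)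
    also have "\<dots> = card ({L k..<R k} \<inter> {v. lab K v = Some 0 \<or> lab K v = Some q})"
      unfolding x_def by (simp add: sum.If_cases)
    also have "{L k..<R k} \<inter> {v. lab K v = Some 0 \<or> lab K v = Some q}
       = {v\<in>{L k..<R k}. lab k v = Some 0} \<union> {v\<in>{L k..<R k}. lab k v = Some q}"
    proof -
      have "lab K v = lab k v" if "v \<in> {L k..<R k}" for v
        using lab_stable[of v k "K - k"] that k by simp
      thus ?thesis by auto
    qed
    also have "card \<dots> = cnt k 0 + cnt k q"
      unfolding cnt_def using q by (subst card_Un_disjoint) (auto simp: finW simp del: atLeastLessThan_iff)
    also have "\<dots> = 2" using cnt_one[OF v0 k] cnt_one[OF v1 k] by simp
    finally show ?thesis .
  qed
  have inK: "int j \<in> Kset a b c t x" if "j < Suc K" for j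
    unfolding Kset_def using M2[of j] that by simp
  have "enat (Suc K) \<le> Qtx a b c t x"
  proof -
    have ne: "Kset a b c t x \<noteq> {}" using inK[of 0] by auto
    have "enat (Suc K) \<in> {enat n |n. \<exists>m::int. \<forall>j::nat. j < n \<longrightarrow> m + int j \<in> Kset a b c t x}"
    proof -
      have "\<exists>m::int. \<forall>j::nat. j < Suc K \<longrightarrow> m + int j \<in> Kset a b c t x"
        using inK by (intro exI[of _ 0]) simp
      thus ?thesis by blast
    qed
    hence "enat (Suc K) \<le> Sup {enat n |n. \<exists>m::int. \<forall>j::nat. j < n \<longrightarrow> m + int j \<in> Kset a b c t x}"
      by (rule Sup_upper)
    thus ?thesis unfolding Qtx_def using ne by simp
  qed
  also have "Qtx a b c t x \<le> Qabc a b c"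
    unfolding Qabc_def
    by (rule SUP_upper2[of t], simp, rule SUP_upper[OF xB])
  finally show False using Q by simp
qed

lemma sum_pairs:
  fixes f :: "nat \<Rightarrow> real" assumes "\<And>j. 0 \<le> f j"
  shows "(\<Sum>j<K. f j + f (Suc j)) + f K \<le> 2 * (\<Sum>k\<le>K. f k)"
  by (induction K) (auto simp: assms)

lemma main:
  assumes Q: "Qabc a b c = enat K"
  shows "cmod (z 0) \<le> 2 * (\<Sum>k\<le>K. cmod (S k))"
proof -
  have PB: "Phi K + cmod (S K) \<le> 2 * (\<Sum>k\<le>K. cmod (S k))"
    using Phi_bound[of K] sum_pairs[of "\<lambda>k. cmod (S k)" K] by simp
  have sg: "0 \<le> (\<Sum>v\<in>{L K..<R K}. g K v)" by (rule sum_nonneg) (rule g_nonneg)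
  show ?thesis
  proof (cases "ex0 K")
    case False
    then have "cmod (z 0) \<le> Phi K" unfolding Phi_def using sg by simp
    then show ?thesis using PB norm_ge_zero[of "S K"] by linarith
  next
    case True
    then obtain v0 where v0: "v0 \<in> {L K..<R K}" "lab K v0 = Some 0" unfolding ex0_def by auto
    have only: "lab K v = None \<or> lab K v = Some 0" if "v \<in> {L K..<R K}" for v
    proof (rule ccontr)
      assume "\<not> ?thesis"
      then obtain q where "lab K v = Some q" "q \<noteq> 0" by auto
      then show False using no_two[OF Q v0 that] by simp
    qed
    define W where "W = {L K..<R K}"
    define P where "P v = (lab K v = Some 0)" for v
    define h where "h v = (if P v then z v - z 0 else z v)" for v
    have fW: "finite W" unfolding W_def by simp
    have "S K = (\<Sum>v\<in>W. h v + (if P v then z 0 else 0))"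
      unfolding S_eq W_def[symmetric] h_def by (intro sum.cong) auto
    also have "\<dots> = (\<Sum>v\<in>W. h v) + of_nat (card {v\<in>W. P v}) * z 0"
      by (simp add: sum.distrib sum.inter_filter[OF fW, symmetric])
    finally have eq: "of_nat (card {v\<in>W. P v}) * z 0 = S K - (\<Sum>v\<in>W. h v)" by simp
    have "card {v\<in>W. P v} > 0" using v0 finW[of "L K" "R K" P] unfolding W_def P_def
      by (auto simp: card_gt_0_iff simp del: atLeastLessThan_iff)
    hence n1: "card {v\<in>W. P v} \<ge> 1" by simp
    have hg: "cmod (h v) = g K v" if "v \<in> W" for v
      using only[of v] that unfolding W_def h_def P_def g_def by auto
    have "real (card {v\<in>W. P v}) * cmod (z 0) = cmod (S K - (\<Sum>v\<in>W. h v))"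
      using arg_cong[OF eq, of cmod] by (simp add: norm_mult)
    also have "\<dots> \<le> cmod (S K) + cmod (\<Sum>v\<in>W. h v)" by (rule norm_triangle_ineq4)
    also have "cmod (\<Sum>v\<in>W. h v) \<le> (\<Sum>v\<in>W. cmod (h v))" by (rule norm_sum)
    also have "\<dots> = (\<Sum>v\<in>W. g K v)" using hg by simp
    finally have "real (card {v\<in>W. P v}) * cmod (z 0) \<le> cmod (S K) + (\<Sum>v\<in>W. g K v)" by simp
    moreover have "cmod (z 0) \<le> real (card {v\<in>W. P v}) * cmod (z 0)"
      using n1 by (simp add: mult_le_cancel_right1)
    ultimately have "cmod (z 0) \<le> cmod (S K) + Phi K"
      unfolding Phi_def W_def using True by simp
    then show ?thesis using PB by simp
  qed
qed

end



theorem lemma3p5: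
  fixes a b c t :: real and z :: "int \<Rightarrow> complex"
  assumes "0 < a" and "a < b" and "b < c"
    and "Qabc a b c \<noteq> \<infinity>"
    and "0 \<le> t" and "t < b"
  shows "(\<Sum>m\<in>{m::int. 0 \<le> a * of_int m \<and>
              a * of_int m \<le> a * real (the_enat (Qabc a b c)) + 2 * a + b + c}.
            norm (Mapply a b c t z m))
         \<ge> b / (2 * c) * norm (z 0)"
proof -
  interpret setup35 a b c t z using assms by unfold_locales auto
  obtain K where Q: "Qabc a b c = enat K" using assms(4) by (cases "Qabc a b c") auto
  have m: "cmod (z 0) \<le> 2 * (\<Sum>k\<le>K. cmod (S k))" by (rule main[OF Q])
  define X where "X = a * real K + 2 * a + b + c"
  let ?I = "{m::int. 0 \<le> a * of_int m \<and> a * of_int m \<le> X}"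
  have fin: "finite ?I"
  proof (rule finite_subset[of _ "{0..\<lceil>X / a\<rceil>}"])
    show "?I \<subseteq> {0..\<lceil>X / a\<rceil>}"
    proof
      fix m assume "m \<in> ?I"
      hence h: "0 \<le> a * of_int m" "a * of_int m \<le> X" by auto
      have "0 \<le> m" using h(1) assms(1) by (simp add: zero_le_mult_iff)
      moreover have "of_int m \<le> X / a" using h(2) assms(1) by (simp add: pos_le_divide_eq mult.commute)
      hence "m \<le> \<lceil>X / a\<rceil>" by linarith
      ultimately show "m \<in> {0..\<lceil>X / a\<rceil>}" by simp
    qed
  qed simp
  have sub: "int ` {..K} \<subseteq> ?I"
  proof
    fix m assume "m \<in> int ` {..K}"
    then obtain k where k: "k \<le> K" "m = int k" by auto
    have "a * real k \<le> a * real K" using k assms(1) by simp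
    moreover have "0 \<le> 2 * a + b + c" using assms by simp
    ultimately have "a * real k \<le> X" unfolding X_def by linarith
    moreover have "0 \<le> a * real k" using assms(1) by simp
    ultimately show "m \<in> ?I" using k by simp
  qed
  have "(\<Sum>k\<le>K. cmod (S k)) = (\<Sum>m\<in>int ` {..K}. cmod (Mapply a b c t z m))"
    by (simp add: sum.reindex S_def)
  also have "\<dots> \<le> (\<Sum>m\<in>?I. cmod (Mapply a b c t z m))"
    by (rule sum_mono2[OF fin sub]) simp
  finally have s: "cmod (z 0) \<le> 2 * (\<Sum>m\<in>?I. cmod (Mapply a b c t z m))" using m by linarith
  have "b / (2 * c) \<le> 1 / 2" using assms by (simp add: divide_simps)
  hence "b / (2 * c) * cmod (z 0) \<le> 1 / 2 * cmod (z 0)" by (rule mult_right_mono) simp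
  also have "\<dots> \<le> (\<Sum>m\<in>?I. cmod (Mapply a b c t z m))" using s by simp
  finally show ?thesis using Q unfolding X_def by simp
qed


end
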